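(* Let $\xi\sim\mathcal N_p(\mu,\Sigma)$ with $\Sigma$ positive semidefinite and $\operatorname{trace}(\Sigma)<1/(4e)$. Then $$\rho_{\rm K}(\xi,\mu)\le\sqrt{-4\operatorname{trace}(\Sigma)\log\{4\operatorname{trace}(\Sigma)\}} .$$
   Context: $\rho_{\rm K}(\xi,\mu)=\inf\{\varepsilon>0:\ \mathbb P(\|\xi-\mu\|>\varepsilon)<\varepsilon\}$ is the Ky Fan distance with respect to the Euclidean norm on $\mathbb R^p$. *)

theory Defs
  imports "HOL-Probability.Probability"
begin

definition ky_fan_dist ::
  "'a measure \<Rightarrow> ('a \<Rightarrow> 'b::real_normed_vector) \<Rightarrow> ('a \<Rightarrow> 'b) \<Rightarrow> real" where
  "ky_fan_dist M X Y =
     Inf {\<epsilon>. 0 < \<epsilon> \<and> measure M {x \<in> space M. norm (X x - Y x) > \<epsilon>} < \<epsilon>}"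

text \<open>xi is distributed as N_p(mu, Sigma) (possibly degenerate), defined via the
  characteristic function: E exp(i t.xi) = exp(i t.mu - t' Sigma t / 2) for all t.\<close>
definition gaussian_vector ::
  "'a measure \<Rightarrow> ('a \<Rightarrow> real^'p) \<Rightarrow> real^'p \<Rightarrow> real^'p^'p \<Rightarrow> bool" where
  "gaussian_vector M \<xi> \<mu> \<Sigma> \<longleftrightarrow>
     \<xi> \<in> borel_measurable M \<and>
     (\<forall>t :: real^'p. (CLINT x|M. cis (t \<bullet> \<xi> x)) =
         cis (t \<bullet> \<mu>) * complex_of_real (exp (- (t \<bullet> (\<Sigma> *v t)) / 2)))"

end

theory Submission imports Defs begin

lemma coord_char:
  fixes \<xi> :: "'a \<Rightarrow> real^'p"
  assumes "gaussian_vector M \<xi> \<mu> \<Sigma>"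
  shows "(CLINT x|M. cis (t * (\<xi> x $ i - \<mu> $ i))) = complex_of_real (exp (- (t^2 * \<Sigma>$i$i) / 2))"
proof -
  define v :: "real^'p" where "v = axis i t"
  have h: "(CLINT x|M. cis (v \<bullet> \<xi> x)) = cis (v \<bullet> \<mu>) * complex_of_real (exp (- (v \<bullet> (\<Sigma> *v v)) / 2))"
    using assms unfolding gaussian_vector_def by blast
  have e1: "\<And>y::real^'p. v \<bullet> y = t * y $ i" unfolding v_def by (simp add: inner_axis' )
  have e2: "v \<bullet> (\<Sigma> *v v) = t^2 * \<Sigma>$i$i"
    unfolding e1 by (simp add: v_def matrix_vector_mult_def axis_def power2_eq_square if_distrib sum.delta cong: if_cong)
  have "(CLINT x|M. cis (t * (\<xi> x $ i - \<mu> $ i))) = (CLINT x|M. cis (v \<bullet> \<xi> x) * cis (- (t * \<mu> $ i)))"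
    by (rule Bochner_Integration.integral_cong) (auto simp: e1 cis_mult right_diff_distrib)
  also have "\<dots> = (CLINT x|M. cis (v \<bullet> \<xi> x)) * cis (- (t * \<mu> $ i))" by simp
  also have "\<dots> = complex_of_real (exp (- (t^2 * \<Sigma>$i$i) / 2))"
    unfolding h e2 by (simp add: e1 cis_mult)
  finally show ?thesis .
qed

lemma char_distr_eq:
  assumes "Y \<in> borel_measurable M"
  shows "char (distr M borel Y) t = (CLINT x|M. cis (t * Y x))"
  unfolding char_def cis_conv_exp
  by (subst integral_distr) (use assms in auto)

lemma real_distr:
  assumes "prob_space M" "Y \<in> borel_measurable M"
  shows "real_distribution (distr M borel Y)"
  using assms by (simp add: real_distribution_def real_distribution_axioms_def prob_space.prob_space_distr)

lemma degenerate_distr: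
  assumes "prob_space M" "X \<in> borel_measurable M"
    and "\<And>t. (CLINT x|M. cis (t * X x)) = complex_of_real (exp (- (t^2 * 0) / 2))"
  shows "distr M borel X = return borel 0"
proof (rule Levy_uniqueness)
  show "real_distribution (distr M borel X)" using assms real_distr by blast
  show "real_distribution (return borel (0::real))"
    by (simp add: real_distribution_def real_distribution_axioms_def prob_space_return)
  show "char (distr M borel X) = char (return borel 0)"
  proof
    fix t
    have "char (return borel 0) t = 1" unfolding char_def
      by (simp add: integral_return)
    then show "char (distr M borel X) t = char (return borel 0) t"
      using assms(3)[of t] by (simp add: char_distr_eq assms(2))
  qed
qed

lemma std_distr:
  assumes "prob_space M" "X \<in> borel_measurable M" "v > 0"
    and "\<And>t. (CLINT x|M. cis (t * X x)) = complex_of_real (exp (- (t^2 * v) / 2))"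
  shows "distr M borel (\<lambda>x. X x / sqrt v) = std_normal_distribution"
proof (rule Levy_uniqueness)
  show "real_distribution (distr M borel (\<lambda>x. X x / sqrt v))" using assms by (intro real_distr) auto
  show "real_distribution std_normal_distribution" by (rule real_dist_normal_dist)
  show "char (distr M borel (\<lambda>x. X x / sqrt v)) = char std_normal_distribution"
  proof
    fix t
    have "char (distr M borel (\<lambda>x. X x / sqrt v)) t = (CLINT x|M. cis ((t / sqrt v) * X x))"
      using assms by (simp add: char_distr_eq)
    also have "\<dots> = complex_of_real (exp (- ((t / sqrt v)^2 * v) / 2))" by (rule assms(4))
    also have "\<dots> = complex_of_real (exp (- (t^2) / 2))" using assms(3)
      by (simp add: power_divide)
    finally show "char (distr M borel (\<lambda>x. X x / sqrt v)) t = char std_normal_distribution t"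
      by (simp add: char_std_normal_distribution)
  qed
qed

lemma std_exp_moment:
  "(\<integral>\<^sup>+ y. ennreal (exp (y^2/4)) \<partial>std_normal_distribution) = ennreal (sqrt 2)"
proof -
  have eq: "\<And>y. std_normal_density y * exp (y^2/4) = sqrt 2 * normal_density 0 (sqrt 2) y"
    unfolding normal_density_def
    by (simp add: real_sqrt_mult exp_add[symmetric] field_simps)
  have "(\<integral>\<^sup>+ y. ennreal (exp (y^2/4)) \<partial>std_normal_distribution)
      = (\<integral>\<^sup>+ y. ennreal (std_normal_density y) * ennreal (exp (y^2/4)) \<partial>lborel)"
    by (subst nn_integral_density) (auto simp: normal_density_nonneg)
  also have "\<dots> = (\<integral>\<^sup>+ y. ennreal (sqrt 2) * ennreal (normal_density 0 (sqrt 2) y) \<partial>lborel)"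
    by (simp add: ennreal_mult'[symmetric] normal_density_nonneg eq)
  also have "\<dots> = ennreal (sqrt 2) * (\<integral>\<^sup>+ y. ennreal (normal_density 0 (sqrt 2) y) \<partial>lborel)"
    by (rule nn_integral_cmult) auto
  also have "(\<integral>\<^sup>+ y. ennreal (normal_density 0 (sqrt 2) y) \<partial>lborel) = 1"
  proof -
    interpret p: prob_space "density lborel (normal_density 0 (sqrt 2))"
      by (rule prob_space_normal_density) simp
    show ?thesis using p.emeasure_space_1
      by (simp add: emeasure_density)
  qed
  finally show ?thesis by simp
qed

lemma exp_moment_bound:
  assumes "prob_space M" "X \<in> borel_measurable M" "v \<ge> 0" "c \<ge> 0" "4 * c * v \<le> 1"
    and "\<And>t. (CLINT x|M. cis (t * X x)) = complex_of_real (exp (- (t^2 * v) / 2))"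
  shows "(\<integral>\<^sup>+ x. ennreal (exp (c * (X x)^2)) \<partial>M) \<le> ennreal (sqrt 2)"
proof (cases "v = 0")
  case True
  have d: "distr M borel X = return borel 0"
    using assms True by (intro degenerate_distr) auto
  have "(\<integral>\<^sup>+ x. ennreal (exp (c * (X x)^2)) \<partial>M) = (\<integral>\<^sup>+ y. ennreal (exp (c * y^2)) \<partial>distr M borel X)"
    by (subst nn_integral_distr) (use assms in auto)
  also have "\<dots> = 1" unfolding d by (simp add: nn_integral_return)
  finally show ?thesis by simp
next
  case False
  then have vp: "v > 0" using assms by simp
  have d: "distr M borel (\<lambda>x. X x / sqrt v) = std_normal_distribution"
    using assms vp by (intro std_distr) auto
  have "(\<integral>\<^sup>+ x. ennreal (exp (c * (X x)^2)) \<partial>M) \<le> (\<integral>\<^sup>+ x. ennreal (exp ((X x / sqrt v)^2/4)) \<partial>M)"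
  proof (rule nn_integral_mono)
    fix x
    have "c * (X x)^2 = (c * v) * (X x / sqrt v)^2" using vp by (simp add: power_divide)
    also have "\<dots> \<le> (1/4) * (X x / sqrt v)^2"
      using assms by (intro mult_right_mono) auto
    finally show "ennreal (exp (c * (X x)^2)) \<le> ennreal (exp ((X x / sqrt v)^2/4))"
      by (intro ennreal_leI) simp
  qed
  also have "\<dots> = (\<integral>\<^sup>+ y. ennreal (exp (y^2/4)) \<partial>distr M borel (\<lambda>x. X x / sqrt v))"
    by (subst nn_integral_distr) (use assms in auto)
  also have "\<dots> = ennreal (sqrt 2)" unfolding d by (rule std_exp_moment)
  finally show ?thesis .
qed

lemma degenerate_AE:
  assumes "prob_space M" "X \<in> borel_measurable M"
    and "\<And>t. (CLINT x|M. cis (t * X x)) = complex_of_real (exp (- (t^2 * 0) / 2))"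
  shows "AE x in M. X x = 0"
proof -
  have d: "distr M borel X = return borel 0"
    using assms by (intro degenerate_distr) auto
  have "AE y in distr M borel X. y = 0" unfolding d by (simp add: AE_return)
  then show ?thesis by (subst (asm) AE_distr_iff) (use assms in auto)
qed

lemma axis_quad:
  fixes \<Sigma> :: "real^'p^'p"
  shows "axis i t \<bullet> (\<Sigma> *v axis i t) = t^2 * \<Sigma>$i$i"
proof -
  have "(\<Sigma> *v axis i t) $ i = \<Sigma>$i$i * t"
    by (simp add: matrix_vector_mult_def axis_def if_distrib cong: if_cong)
  then show ?thesis by (simp add: inner_axis' power2_eq_square)
qed

lemma exp_jensen:
  fixes w a :: "'i \<Rightarrow> real"
  assumes "finite I" "I \<noteq> {}" "sum w I = 1" "\<And>i. i \<in> I \<Longrightarrow> w i > 0"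
  shows "exp (\<Sum>i\<in>I. a i) \<le> (\<Sum>i\<in>I. w i * exp (a i / w i))"
proof -
  have "exp (\<Sum>i\<in>I. w i *\<^sub>R (a i / w i)) \<le> (\<Sum>i\<in>I. w i * exp (a i / w i))"
    using assms by (intro convex_on_sum[OF _ _ exp_convex]) (auto simp: less_imp_le)
  moreover have "(\<Sum>i\<in>I. w i *\<^sub>R (a i / w i)) = (\<Sum>i\<in>I. a i)"
    by (intro sum.cong refl) (force dest: assms(4))
  ultimately show ?thesis by simp
qed

lemma norm_sq_sum: "(norm (x :: real^'p))^2 = (\<Sum>i\<in>UNIV. (x$i)^2)"
  by (simp only: power2_norm_eq_inner) (simp add: inner_vec_def power2_eq_square)


theorem mainTheorem6:
  fixes M :: "'a measure" and \<xi> :: "'a \<Rightarrow> real^'p"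
    and \<mu> :: "real^'p" and \<Sigma> :: "real^'p^'p"
  assumes "prob_space M"
    and "transpose \<Sigma> = \<Sigma>"
    and "\<forall>v :: real^'p. 0 \<le> v \<bullet> (\<Sigma> *v v)"
    and "gaussian_vector M \<xi> \<mu> \<Sigma>"
    and "trace \<Sigma> < 1 / (4 * exp 1)"
  shows "ky_fan_dist M \<xi> (\<lambda>_. \<mu>) \<le> sqrt (- 4 * trace \<Sigma> * ln (4 * trace \<Sigma>))"
proof -
  interpret P: prob_space M by (rule assms(1))
  have \<xi>m[measurable]: "\<xi> \<in> borel_measurable M" using assms(4) unfolding gaussian_vector_def by blast
  define X where "X = (\<lambda>i x. \<xi> x $ i - \<mu> $ i)"
  define \<sigma> where "\<sigma> = (\<lambda>i. \<Sigma>$i$i)"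
  define s where "s = trace \<Sigma>"
  have Xm[measurable]: "\<And>i. X i \<in> borel_measurable M" unfolding X_def
    by (intro borel_measurable_diff borel_measurable_const borel_measurable_continuous_on[OF _ \<xi>m])
       (auto intro: continuous_intros)
  have charX: "\<And>i t. (CLINT x|M. cis (t * X i x)) = complex_of_real (exp (- (t^2 * \<sigma> i) / 2))"
    unfolding X_def \<sigma>_def by (rule coord_char[OF assms(4)])
  have \<sigma>nn: "\<And>i. \<sigma> i \<ge> 0"
    using assms(3) axis_quad[of i 1 \<Sigma> for i] unfolding \<sigma>_def by (metis mult_1 power_one)
  have s_def': "s = (\<Sum>i\<in>UNIV. \<sigma> i)" unfolding s_def \<sigma>_def trace_def ..
  have s_nn: "s \<ge> 0" unfolding s_def' by (intro sum_nonneg \<sigma>nn)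
  have normX: "\<And>x. (norm (\<xi> x - \<mu>))^2 = (\<Sum>i\<in>UNIV. (X i x)^2)"
    unfolding norm_sq_sum X_def by simp
  define D where "D = {\<epsilon>. 0 < \<epsilon> \<and> measure M {x \<in> space M. norm (\<xi> x - \<mu>) > \<epsilon>} < \<epsilon>}"
  have kf: "ky_fan_dist M \<xi> (\<lambda>_. \<mu>) = Inf D" unfolding ky_fan_dist_def D_def ..
  have bdd: "bdd_below D" unfolding D_def by (rule bdd_belowI[of _ 0]) auto
  have zeroAE: "\<And>i. \<sigma> i = 0 \<Longrightarrow> AE x in M. X i x = 0"
    using charX by (intro degenerate_AE[OF assms(1)]) auto
  show ?thesis
  proof (cases "s = 0")
    case True
    then have "\<And>i. \<sigma> i = 0" using s_def' \<sigma>nn sum_nonneg_eq_0_iff[of UNIV \<sigma>] by auto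
    then have "AE x in M. \<forall>i\<in>UNIV. X i x = 0" by (intro AE_finite_allI) (auto intro: zeroAE)
    then have AE0: "AE x in M. norm (\<xi> x - \<mu>) = 0"
    proof eventually_elim
      case (elim x)
      then have "(norm (\<xi> x - \<mu>))^2 = 0" unfolding normX by simp
      then show ?case by simp
    qed
    have inD: "\<epsilon> \<in> D" if "\<epsilon> > 0" for \<epsilon>
    proof -
      have "{x \<in> space M. norm (\<xi> x - \<mu>) > \<epsilon>} \<in> null_sets M"
        using AE0 that by (subst AE_iff_null_sets) (auto elim!: AE_mp)
      then show ?thesis unfolding D_def using that by (simp add: measure_eq_0_null_sets)
    qed
    have "Inf D \<le> 0"
    proof (rule ccontr)
      assume "\<not> Inf D \<le> 0"
      then have "Inf D / 2 \<in> D" by (intro inD) simp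
      then have "Inf D \<le> Inf D / 2" by (rule cInf_lower[OF _ bdd])
      then show False using \<open>\<not> Inf D \<le> 0\<close> by simp
    qed
    then show ?thesis unfolding kf s_def[symmetric] True by simp
  next
    case False
    then have sp: "s > 0" using s_nn by simp
    define u where "u = 4 * s"
    have up: "u > 0" using sp u_def by simp
    have e2: "exp 1 \<ge> (2::real)" using exp_ge_add_one_self[of "1::real"] by simp
    have ue: "u < 1 / exp 1" using assms(5) unfolding u_def s_def by (simp add: field_simps)
    have lnu: "ln u < -1"
    proof -
      have "ln u < ln (1 / exp 1)" using up ue by (subst ln_less_cancel_iff) auto
      then show ?thesis by (simp add: ln_div)
    qed
    have u2: "2 * u < 1"
    proof -
      have "2 * u < 2 / exp 1" using ue by simp
      also have "\<dots> \<le> 1" using e2 by simp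
      finally show ?thesis .
    qed
    define \<epsilon> where "\<epsilon> = sqrt (- u * ln u)"
    have pos: "- u * ln u > 0" using up lnu mult_pos_neg[of u "ln u"] by linarith
    have \<epsilon>p: "\<epsilon> > 0" unfolding \<epsilon>_def using pos by simp
    have \<epsilon>sq: "\<epsilon>^2 = - u * ln u" unfolding \<epsilon>_def using pos by simp
    define lam where "lam = 1 / u"
    define I where "I = {i. \<sigma> i > 0}"
    define w where "w = (\<lambda>i. \<sigma> i / s)"
    define n where "n = (\<lambda>x. norm (\<xi> x - \<mu>))"
    have nm[measurable]: "n \<in> borel_measurable M" unfolding n_def by measurable
    have sI: "s = (\<Sum>i\<in>I. \<sigma> i)" unfolding s_def' I_def
      using \<sigma>nn by (intro sum.mono_neutral_right) (auto simp: less_le)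
    have Ine: "I \<noteq> {}" using sI sp by auto
    have wsum: "sum w I = 1" unfolding w_def using sI sp by (simp add: sum_divide_distrib[symmetric])
    have wpos: "\<And>i. i \<in> I \<Longrightarrow> w i > 0" unfolding w_def I_def using sp by simp
    have "AE x in M. \<forall>i\<in>UNIV - I. X i x = 0"
      by (intro AE_finite_allI) (auto intro!: zeroAE simp: I_def less_le \<sigma>nn)
    then have AEn: "AE x in M. (n x)^2 = (\<Sum>i\<in>I. (X i x)^2)"
    proof eventually_elim
      case (elim x)
      then show ?case unfolding n_def normX by (intro sum.mono_neutral_right) auto
    qed
    have bound: "(\<integral>\<^sup>+ x. ennreal (exp (lam * (n x)^2)) \<partial>M) \<le> ennreal (sqrt 2)"
    proof -
      have "(\<integral>\<^sup>+ x. ennreal (exp (lam * (n x)^2)) \<partial>M) = (\<integral>\<^sup>+ x. ennreal (exp (\<Sum>i\<in>I. lam * (X i x)^2)) \<partial>M)"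
        by (rule nn_integral_cong_AE) (use AEn in \<open>auto simp: sum_distrib_left\<close>)
      also have "\<dots> \<le> (\<integral>\<^sup>+ x. ennreal (\<Sum>i\<in>I. w i * exp ((1 / (4 * \<sigma> i)) * (X i x)^2)) \<partial>M)"
      proof (rule nn_integral_mono)
        fix x
        have "exp (\<Sum>i\<in>I. lam * (X i x)^2) \<le> (\<Sum>i\<in>I. w i * exp (lam * (X i x)^2 / w i))"
          using Ine wsum wpos by (intro exp_jensen) auto
        also have "\<dots> = (\<Sum>i\<in>I. w i * exp ((1 / (4 * \<sigma> i)) * (X i x)^2))"
          using sp by (intro sum.cong refl) (simp add: w_def lam_def u_def field_simps)
        finally show "ennreal (exp (\<Sum>i\<in>I. lam * (X i x)^2)) \<le> ennreal (\<Sum>i\<in>I. w i * exp ((1 / (4 * \<sigma> i)) * (X i x)^2))"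
          by (rule ennreal_leI)
      qed
      also have "\<dots> = (\<integral>\<^sup>+ x. (\<Sum>i\<in>I. ennreal (w i) * ennreal (exp ((1 / (4 * \<sigma> i)) * (X i x)^2))) \<partial>M)"
        using wpos by (intro nn_integral_cong) (simp add: ennreal_mult[symmetric] less_imp_le sum_ennreal)
      also have "\<dots> = (\<Sum>i\<in>I. ennreal (w i) * (\<integral>\<^sup>+ x. ennreal (exp ((1 / (4 * \<sigma> i)) * (X i x)^2)) \<partial>M))"
        by (subst nn_integral_sum) (auto simp: nn_integral_cmult)
      also have "\<dots> \<le> (\<Sum>i\<in>I. ennreal (w i) * ennreal (sqrt 2))"
      proof (intro sum_mono mult_left_mono order.refl)
        fix i assume "i \<in> I"
        then have "\<sigma> i > 0" unfolding I_def by simp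
        then show "(\<integral>\<^sup>+ x. ennreal (exp ((1 / (4 * \<sigma> i)) * (X i x)^2)) \<partial>M) \<le> ennreal (sqrt 2)"
          by (intro exp_moment_bound[OF assms(1) Xm _ _ _ charX]) auto
      qed auto
      also have "\<dots> = ennreal (sqrt 2)"
        using wpos wsum by (simp add: ennreal_mult[symmetric] less_imp_le sum_ennreal sum_distrib_right[symmetric])
      finally show ?thesis .
    qed
    have "emeasure M {x \<in> space M. n x > \<epsilon>} \<le> emeasure M {x \<in> space M. 1 \<le> ennreal (exp (- lam * \<epsilon>^2)) * ennreal (exp (lam * (n x)^2))}"
    proof (rule emeasure_mono)
      show "{x \<in> space M. n x > \<epsilon>} \<subseteq> {x \<in> space M. 1 \<le> ennreal (exp (- lam * \<epsilon>^2)) * ennreal (exp (lam * (n x)^2))}"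
      proof safe
        fix x assume "x \<in> space M" "n x > \<epsilon>"
        then have "\<epsilon>^2 \<le> (n x)^2" using \<epsilon>p by (intro power_mono) auto
        then have "- lam * \<epsilon>^2 + lam * (n x)^2 \<ge> 0" using up lam_def by (simp add: algebra_simps divide_right_mono)
        then have "1 \<le> exp (- lam * \<epsilon>^2) * exp (lam * (n x)^2)" by (simp add: exp_add[symmetric])
        then show "1 \<le> ennreal (exp (- lam * \<epsilon>^2)) * ennreal (exp (lam * (n x)^2))"
          by (simp add: ennreal_mult[symmetric] ennreal_1[symmetric] del: ennreal_1)
      qed
    qed measurable
    also have "\<dots> \<le> ennreal (exp (- lam * \<epsilon>^2)) * (\<integral>\<^sup>+ x. ennreal (exp (lam * (n x)^2)) * indicator (space M) x \<partial>M)"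
      using nn_integral_Markov_inequality[of "\<lambda>x. ennreal (exp (lam * (n x)^2))" "space M" M "ennreal (exp (- lam * \<epsilon>^2))"]
      by simp
    also have "(\<integral>\<^sup>+ x. ennreal (exp (lam * (n x)^2)) * indicator (space M) x \<partial>M) = (\<integral>\<^sup>+ x. ennreal (exp (lam * (n x)^2)) \<partial>M)"
      by (intro nn_integral_cong) simp
    also have "exp (- lam * \<epsilon>^2) = u" using up unfolding \<epsilon>sq lam_def by simp
    also have "ennreal u * (\<integral>\<^sup>+ x. ennreal (exp (lam * (n x)^2)) \<partial>M) \<le> ennreal u * ennreal (sqrt 2)"
      by (intro mult_left_mono bound) auto
    finally have "emeasure M {x \<in> space M. n x > \<epsilon>} \<le> ennreal (u * sqrt 2)"
      using up by (simp add: ennreal_mult)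
    then have m1: "measure M {x \<in> space M. n x > \<epsilon>} \<le> u * sqrt 2"
      using up by (simp add: P.emeasure_eq_measure ennreal_le_iff)
    have "u * sqrt 2 < \<epsilon>"
    proof -
      have "(u * sqrt 2)^2 = u * (2 * u)" by (simp add: power_mult_distrib power2_eq_square)
      also have "\<dots> < u * (- ln u)" using up u2 lnu by (intro mult_strict_left_mono) auto
      finally have "(u * sqrt 2)^2 < - u * ln u" by simp
      then show ?thesis unfolding \<epsilon>_def by (intro real_less_rsqrt)
    qed
    then have "\<epsilon> \<in> D" using m1 \<epsilon>p unfolding D_def n_def by auto
    then have "Inf D \<le> \<epsilon>" by (rule cInf_lower[OF _ bdd])
    moreover have "sqrt (- 4 * trace \<Sigma> * ln (4 * trace \<Sigma>)) = \<epsilon>"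
      unfolding \<epsilon>_def u_def s_def by simp
    ultimately show ?thesis unfolding kf by simp
  qed
qed
end
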